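(* For every $i\in\{0,\dots,m-1\}$ and every real $B$ with $B_i\le B\le\kappa B_{i+1}$, $$\Lambda_{B,\,mB\beta^{-1}}=\langle \operatorname{pr}(b_1),\dots,\operatorname{pr}(b_i)\rangle .$$
   Context: Let $m\ge2$ and $1\le p\le m$ be integers and $P\in\mathbb{R}^{m\times p}$. Vectors of $\mathbb{Z}^m$, $\mathbb{R}^m$ are row vectors and all norms $\|\cdot\|$ are Euclidean. Let $\Lambda=\{x\in\mathbb{Z}^m : xP=0\}$. For $B,\varepsilon>0$, $\Lambda_{B,\varepsilon}$ denotes the subgroup of $\mathbb{Z}^m$ generated by $\{x\in\mathbb{Z}^m : \|x\|\le B,\ \|xP\|<\varepsilon\}$. Let $\beta>0$ and let $P_\beta\in\mathbb{Z}^{m\times p}$ be such that every entry of $P_\beta-\beta P$ lies in $[-\tfrac12,\tfrac12]$. Let $R\subset\mathbb{Z}^{p+m}$ be the lattice spanned by the rows of the $m\times(p+m)$ matrix $[\,P_\beta\mid I_m\,]$, and let $b_1,\dots,b_m$ be a basis of $R$ that is LLL-reduced (Lenstra–Lenstra–Lovász, with parameter $3/4$) and satisfies $\|b_1\|\le\dots\le\|b_m\|$. Set $B_0=0$, $B_i=\|b_i\|$ for $1\le i\le m$, $\kappa=m^{-1}2^{-(m+1)/2}$, and let $\operatorname{pr}\colon\mathbb{Z}^{p+m}\to\mathbb{Z}^m$ be the projection onto the last $m$ coordinates. *)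

theory Defs
  imports Complex_Main
begin

text \<open>Vectors of Z^n / R^n are functions nat => int / nat => real, with coordinates
indexed 0..n-1 (coordinates >= n are required to be 0 where membership matters).
Matrices are functions nat => nat => _, entry (row j, column k).\<close>

definition zvecs :: "nat \<Rightarrow> (nat \<Rightarrow> int) set" where
  "zvecs n = {x. \<forall>k\<ge>n. x k = 0}"

definition rnorm :: "nat \<Rightarrow> (nat \<Rightarrow> real) \<Rightarrow> real" where
  "rnorm n x = sqrt (\<Sum>k<n. (x k)^2)"

definition znorm :: "nat \<Rightarrow> (nat \<Rightarrow> int) \<Rightarrow> real" where
  "znorm n x = rnorm n (\<lambda>k. real_of_int (x k))"

definition rinner :: "nat \<Rightarrow> (nat \<Rightarrow> real) \<Rightarrow> (nat \<Rightarrow> real) \<Rightarrow> real" where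
  "rinner n x y = (\<Sum>k<n. x k * y k)"

definition vecmat :: "nat \<Rightarrow> nat \<Rightarrow> (nat \<Rightarrow> int) \<Rightarrow> (nat \<Rightarrow> nat \<Rightarrow> real) \<Rightarrow> (nat \<Rightarrow> real)" where
  "vecmat m p x P = (\<lambda>k. if k < p then (\<Sum>j<m. real_of_int (x j) * P j k) else 0)"

definition int_span :: "(nat \<Rightarrow> int) set \<Rightarrow> (nat \<Rightarrow> int) set" where
  "int_span S = {(\<lambda>k. \<Sum>v\<in>F. c v * v k) | F c. finite F \<and> F \<subseteq> S}"

definition Lam :: "nat \<Rightarrow> nat \<Rightarrow> (nat \<Rightarrow> nat \<Rightarrow> real) \<Rightarrow> real \<Rightarrow> real \<Rightarrow> (nat \<Rightarrow> int) set" where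
  "Lam m p P B \<epsilon> = int_span {x \<in> zvecs m. znorm m x \<le> B \<and> rnorm p (vecmat m p x P) < \<epsilon>}"

text \<open>Rows (j = 0..m-1) of the m x (p+m) integer matrix [P_beta | I_m].\<close>
definition augrow :: "nat \<Rightarrow> nat \<Rightarrow> (nat \<Rightarrow> nat \<Rightarrow> int) \<Rightarrow> nat \<Rightarrow> (nat \<Rightarrow> int)" where
  "augrow m p Pb j = (\<lambda>k. if k < p then Pb j k else if k < p + m \<and> k - p = j then 1 else 0)"

definition augLattice :: "nat \<Rightarrow> nat \<Rightarrow> (nat \<Rightarrow> nat \<Rightarrow> int) \<Rightarrow> (nat \<Rightarrow> int) set" where
  "augLattice m p Pb = int_span (augrow m p Pb ` {..<m})"

definition pr :: "nat \<Rightarrow> nat \<Rightarrow> (nat \<Rightarrow> int) \<Rightarrow> (nat \<Rightarrow> int)" where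
  "pr m p x = (\<lambda>j. if j < m then x (p + j) else 0)"

definition is_lattice_basis :: "nat \<Rightarrow> nat \<Rightarrow> (nat \<Rightarrow> (nat \<Rightarrow> int)) \<Rightarrow> (nat \<Rightarrow> int) set \<Rightarrow> bool" where
  "is_lattice_basis n m b L \<longleftrightarrow>
     (\<forall>i\<in>{1..m}. b i \<in> zvecs n) \<and>
     int_span (b ` {1..m}) = L \<and>
     (\<forall>c::nat \<Rightarrow> int. (\<forall>k. (\<Sum>i=1..m. c i * b i k) = 0) \<longrightarrow> (\<forall>i\<in>{1..m}. c i = 0))"

fun gso :: "nat \<Rightarrow> (nat \<Rightarrow> (nat \<Rightarrow> real)) \<Rightarrow> nat \<Rightarrow> (nat \<Rightarrow> real)" where
  "gso n b i = (\<lambda>k. b i k - (\<Sum>j\<in>{1..<i}.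
      (rinner n (b i) (gso n b j) / rinner n (gso n b j) (gso n b j)) * gso n b j k))"

definition gs_mu :: "nat \<Rightarrow> (nat \<Rightarrow> (nat \<Rightarrow> real)) \<Rightarrow> nat \<Rightarrow> nat \<Rightarrow> real" where
  "gs_mu n b i j = rinner n (b i) (gso n b j) / rinner n (gso n b j) (gso n b j)"

definition LLL_reduced :: "real \<Rightarrow> nat \<Rightarrow> nat \<Rightarrow> (nat \<Rightarrow> (nat \<Rightarrow> real)) \<Rightarrow> bool" where
  "LLL_reduced \<delta> n m b \<longleftrightarrow>
     (\<forall>i j. 1 \<le> j \<and> j < i \<and> i \<le> m \<longrightarrow> \<bar>gs_mu n b i j\<bar> \<le> 1/2) \<and>
     (\<forall>i. 2 \<le> i \<and> i \<le> m \<longrightarrow>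
        (\<delta> - (gs_mu n b i (i-1))^2) * (rnorm n (gso n b (i-1)))^2 \<le> (rnorm n (gso n b i))^2)"

end

theory Submission
  imports Defs "HOL-Analysis.L2_Norm"
begin

declare gso.simps[simp del]

lemma int_span_add:
  assumes "x \<in> int_span S" "y \<in> int_span S"
  shows "(\<lambda>k. x k + y k) \<in> int_span S"
proof -
  obtain F c where F: "finite F" "F \<subseteq> S" and x: "x = (\<lambda>k. \<Sum>v\<in>F. c v * v k)"
    using assms(1) unfolding int_span_def by blast
  obtain G d where G: "finite G" "G \<subseteq> S" and y: "y = (\<lambda>k. \<Sum>v\<in>G. d v * v k)"
    using assms(2) unfolding int_span_def by blast
  define e where "e v = (if v \<in> F then c v else 0) + (if v \<in> G then d v else 0)" for v
  have 1: "(\<Sum>v\<in>F\<union>G. (if v \<in> F then c v else 0) * v k) = (\<Sum>v\<in>F. c v * v k)" for k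
    by (rule sum.mono_neutral_cong_right) (use F G in auto)
  have 2: "(\<Sum>v\<in>F\<union>G. (if v \<in> G then d v else 0) * v k) = (\<Sum>v\<in>G. d v * v k)" for k
    by (rule sum.mono_neutral_cong_right) (use F G in auto)
  have "(\<lambda>k. x k + y k) = (\<lambda>k. \<Sum>v\<in>F\<union>G. e v * v k)"
    unfolding x y e_def by (auto simp: distrib_right sum.distrib 1 2)
  moreover have "finite (F \<union> G)" "F \<union> G \<subseteq> S" using F G by auto
  ultimately show ?thesis unfolding int_span_def by blast
qed

lemma int_span_smult:
  assumes "x \<in> int_span S"
  shows "(\<lambda>k. a * x k) \<in> int_span S"
proof -
  obtain F c where F: "finite F" "F \<subseteq> S" and x: "x = (\<lambda>k. \<Sum>v\<in>F. c v * v k)"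
    using assms(1) unfolding int_span_def by blast
  have "(\<lambda>k. a * x k) = (\<lambda>k. \<Sum>v\<in>F. (a * c v) * v k)"
    unfolding x by (auto simp: sum_distrib_left mult.assoc)
  with F show ?thesis unfolding int_span_def by (intro CollectI exI[of _ F] exI[of _ "\<lambda>v. a * c v"]) auto
qed

lemma int_span_zero: "(\<lambda>k. 0) \<in> int_span S"
  unfolding int_span_def by (rule CollectI, rule exI[of _ "{}"], auto)

lemma int_span_mem: "v \<in> S \<Longrightarrow> v \<in> int_span S"
  unfolding int_span_def by (rule CollectI, rule exI[of _ "{v}"], rule exI[of _ "\<lambda>_. 1"], auto)

lemma int_span_sum:
  assumes "finite A" "\<forall>a\<in>A. f a \<in> int_span T"
  shows "(\<lambda>k. \<Sum>a\<in>A. c a * f a k) \<in> int_span T"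
  using assms
proof (induction A rule: finite_induct)
  case empty then show ?case using int_span_zero by simp
next
  case (insert a A)
  have "(\<lambda>k. c a * f a k) \<in> int_span T" using insert int_span_smult by auto
  from int_span_add[OF this insert.IH] insert show ?case by simp
qed

lemma int_span_sub:
  assumes "S \<subseteq> int_span T" shows "int_span S \<subseteq> int_span T"
proof
  fix x assume "x \<in> int_span S"
  then obtain F c where F: "finite F" "F \<subseteq> S" and x: "x = (\<lambda>k. \<Sum>v\<in>F. c v * v k)"
    unfolding int_span_def by blast
  show "x \<in> int_span T" unfolding x using int_span_sum[of F "\<lambda>v. v" T c] F assms by auto
qed

lemma int_span_repr:
  assumes "w \<in> int_span (f ` A)" "inj_on f A" "finite A"
  shows "\<exists>d. \<forall>k. w k = (\<Sum>a\<in>A. d a * f a k)"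
proof -
  obtain F c where F: "finite F" "F \<subseteq> f ` A" and x: "w = (\<lambda>k. \<Sum>v\<in>F. c v * v k)"
    using assms(1) unfolding int_span_def by blast
  define A' where "A' = A \<inter> f -` F"
  have FA: "F = f ` A'" using F unfolding A'_def by auto
  have inj: "inj_on f A'" using assms(2) unfolding A'_def by (auto intro: inj_on_subset)
  have "w k = (\<Sum>a\<in>A. (if a \<in> A' then c (f a) else 0) * f a k)" for k
  proof -
    have "w k = (\<Sum>a\<in>A'. c (f a) * f a k)" unfolding x FA using sum.reindex[OF inj] by simp
    also have "\<dots> = (\<Sum>a\<in>A. (if a \<in> A' then c (f a) else 0) * f a k)"
      by (rule sum.mono_neutral_cong_left) (use assms(3) in \<open>auto simp: A'_def\<close>)
    finally show ?thesis .
  qed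
  then show ?thesis by (intro exI[of _ "\<lambda>a. if a \<in> A' then c (f a) else 0"]) blast
qed

lemma rinner_comm: "rinner n x y = rinner n y x"
  unfolding rinner_def by (simp add: mult.commute)

lemma rinner_sum_left:
  "rinner n (\<lambda>k. \<Sum>j\<in>A. c j * f j k) y = (\<Sum>j\<in>A. c j * rinner n (f j) y)"
  unfolding rinner_def by (simp add: sum_distrib_left sum_distrib_right sum.swap[of _ "{..<n}"] mult.assoc)

lemma rinner_sum_right:
  "rinner n y (\<lambda>k. \<Sum>j\<in>A. c j * f j k) = (\<Sum>j\<in>A. c j * rinner n y (f j))"
  using rinner_sum_left[of n c f A y] by (simp add: rinner_comm)

lemma rinner_add_left: "rinner n (\<lambda>k. x k + z k) y = rinner n x y + rinner n z y"
  unfolding rinner_def by (simp add: distrib_right sum.distrib)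

lemma rinner_diff_left: "rinner n (\<lambda>k. x k - z k) y = rinner n x y - rinner n z y"
  unfolding rinner_def by (simp add: left_diff_distrib sum_subtractf)

lemma rinner_add_right: "rinner n y (\<lambda>k. x k + z k) = rinner n y x + rinner n y z"
  using rinner_add_left by (metis rinner_comm)

lemma rinner_self_nonneg: "0 \<le> rinner n x x"
  unfolding rinner_def by (auto intro: sum_nonneg)

lemma rinner_self_zero: "rinner n x x = 0 \<Longrightarrow> rinner n y x = 0"
  unfolding rinner_def by (subst (asm) sum_nonneg_eq_0_iff) auto

lemma gso_eq: "gso n b i = (\<lambda>k. b i k - (\<Sum>j\<in>{1..<i}. gs_mu n b i j * gso n b j k))"
  by (subst gso.simps) (simp add: gs_mu_def)

lemma b_eq: "b i = (\<lambda>k. gso n b i k + (\<Sum>j\<in>{1..<i}. gs_mu n b i j * gso n b j k))"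
  by (subst gso_eq) simp

lemma mu_N: "gs_mu n b i j * rinner n (gso n b j) (gso n b j) = rinner n (b i) (gso n b j)"
proof (cases "rinner n (gso n b j) (gso n b j) = 0")
  case True then show ?thesis using rinner_self_zero by simp
next
  case False then show ?thesis by (simp add: gs_mu_def)
qed

lemma gso_orth: "1 \<le> j \<Longrightarrow> j < k \<Longrightarrow> rinner n (gso n b k) (gso n b j) = 0"
proof (induction k arbitrary: j rule: less_induct)
  case (less k)
  have z: "rinner n (gso n b l) (gso n b j) = 0" if "l \<in> {1..<k}" "l \<noteq> j" for l
  proof (cases "l < j")
    case True
    then have "rinner n (gso n b j) (gso n b l) = 0" using less.IH[of j l] less.prems that by simp
    then show ?thesis by (simp add: rinner_comm)
  next
    case False
    then show ?thesis using less.IH[of l j] less.prems that by simp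
  qed
  have "(\<Sum>l\<in>{1..<k}. gs_mu n b k l * rinner n (gso n b l) (gso n b j))
      = gs_mu n b k j * rinner n (gso n b j) (gso n b j)"
    by (subst sum.remove[of _ j]) (use less.prems z in auto)
  moreover have "rinner n (gso n b k) (gso n b j) = rinner n (b k) (gso n b j) - (\<Sum>l\<in>{1..<k}. gs_mu n b k l * rinner n (gso n b l) (gso n b j))"
    by (subst gso_eq[of n b k]) (simp only: rinner_diff_left rinner_sum_left)
  ultimately show ?case by (simp add: mu_N)
qed

lemma b_gso_orth: "1 \<le> j \<Longrightarrow> j < k \<Longrightarrow> rinner n (b j) (gso n b k) = 0"
proof -
  assume a: "1 \<le> j" "j < k"
  have "rinner n (b j) (gso n b k) = rinner n (gso n b j) (gso n b k) + (\<Sum>l\<in>{1..<j}. gs_mu n b j l * rinner n (gso n b l) (gso n b k))"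
    by (subst b_eq[of b j n]) (simp only: rinner_add_left rinner_sum_left)
  moreover have "rinner n (gso n b l) (gso n b k) = 0" if "1 \<le> l" "l < k" for l
    using gso_orth[OF that, of n b] by (simp add: rinner_comm)
  ultimately show ?thesis using a by simp
qed

lemma b_gso_self: "rinner n (b k) (gso n b k) = rinner n (gso n b k) (gso n b k)"
proof -
  have "rinner n (b k) (gso n b k) = rinner n (gso n b k) (gso n b k) + (\<Sum>l\<in>{1..<k}. gs_mu n b k l * rinner n (gso n b l) (gso n b k))"
    by (subst b_eq[of b k n]) (simp only: rinner_add_left rinner_sum_left)
  moreover have "rinner n (gso n b l) (gso n b k) = 0" if "1 \<le> l" "l < k" for l
    using gso_orth[OF that, of n b] by (simp add: rinner_comm)
  ultimately show ?thesis by simp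
qed

lemma b_norm: "rinner n (b k) (b k) = rinner n (gso n b k) (gso n b k)
   + (\<Sum>l\<in>{1..<k}. (gs_mu n b k l)^2 * rinner n (gso n b l) (gso n b l))"
proof -
  have "rinner n (b k) (b k) = rinner n (b k) (gso n b k) + (\<Sum>l\<in>{1..<k}. gs_mu n b k l * rinner n (b k) (gso n b l))"
    by (subst (2) b_eq[of b k n]) (simp only: rinner_add_right rinner_sum_right)
  also have "\<dots> = rinner n (gso n b k) (gso n b k)
   + (\<Sum>l\<in>{1..<k}. (gs_mu n b k l)^2 * rinner n (gso n b l) (gso n b l))"
    by (simp only: b_gso_self flip: mu_N) (simp add: power2_eq_square mult.assoc)
  finally show ?thesis .
qed

lemma rnorm_sq: "(rnorm n x)^2 = rinner n x x"
  unfolding rnorm_def rinner_def by (simp add: sum_nonneg power2_eq_square)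

lemma geo2: "(\<Sum>l\<in>{1..<k}. (2::real)^(k-l)) \<le> 2^k - 2 \<or> k = 0"
proof (induction k)
  case 0 then show ?case by simp
next
  case (Suc k)
  show ?case
  proof (cases "k = 0")
    case True then show ?thesis by simp
  next
    case False
    have "(\<Sum>l\<in>{1..<Suc k}. (2::real)^(Suc k-l)) = (\<Sum>l\<in>{1..<Suc k}. 2 * 2^(k-l))"
      by (rule sum.cong) (auto simp: Suc_diff_le)
    also have "\<dots> = 2 * (\<Sum>l\<in>{1..<k}. 2^(k-l)) + 2"
      using False by (simp add: sum_distrib_left)
    also have "\<dots> \<le> 2 * (2^k - 2) + 2" using Suc False by simp
    finally show ?thesis by simp
  qed
qed

context
  fixes n m :: nat and b :: "nat \<Rightarrow> nat \<Rightarrow> real"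
  assumes L: "LLL_reduced (3/4) n m b"
begin

abbreviation "NN j \<equiv> rinner n (gso n b j) (gso n b j)"

lemma lll_step: "2 \<le> i \<Longrightarrow> i \<le> m \<Longrightarrow> NN (i-1) \<le> 2 * NN i"
proof -
  assume a: "2 \<le> i" "i \<le> m"
  have mu: "\<bar>gs_mu n b i (i-1)\<bar> \<le> 1/2" using L a unfolding LLL_reduced_def by auto
  have lov: "(3/4 - (gs_mu n b i (i-1))^2) * NN (i-1) \<le> NN i"
    using L a unfolding LLL_reduced_def rnorm_sq by auto
  have "(gs_mu n b i (i-1))^2 \<le> (1/2)^2" using mu
    by (metis abs_ge_zero power2_abs power_mono)
  then have "1/2 * NN (i-1) \<le> (3/4 - (gs_mu n b i (i-1))^2) * NN (i-1)"
    by (intro mult_right_mono) (auto simp: rinner_self_nonneg power2_eq_square)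
  with lov show ?thesis by simp
qed

lemma lll_chain: "1 \<le> l \<Longrightarrow> l + d \<le> m \<Longrightarrow> NN l \<le> 2^d * NN (l+d)"
proof (induction d)
  case 0 then show ?case by simp
next
  case (Suc d)
  have "NN l \<le> 2^d * NN (l+d)" using Suc by simp
  also have "NN (l+d) \<le> 2 * NN (l + Suc d)" using lll_step[of "l + Suc d"] Suc.prems by simp
  then have "2^d * NN (l+d) \<le> 2^d * (2 * NN (l + Suc d))" by simp
  finally show ?case by (simp add: ac_simps)
qed


lemma lll_bound: "1 \<le> k \<Longrightarrow> k \<le> m \<Longrightarrow> rinner n (b k) (b k) \<le> 2^(k-1) * NN k"
proof -
  assume k: "1 \<le> k" "k \<le> m"
  have t: "(gs_mu n b k l)^2 * NN l \<le> 1/4 * (2^(k-l) * NN k)" if "l \<in> {1..<k}" for l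
  proof -
    have "\<forall>i j. 1 \<le> j \<and> j < i \<and> i \<le> m \<longrightarrow> \<bar>gs_mu n b i j\<bar> \<le> 1/2"
      using L unfolding LLL_reduced_def by blast
    moreover have "1 \<le> l \<and> l < k \<and> k \<le> m" using that k by simp
    ultimately have mu: "\<bar>gs_mu n b k l\<bar> \<le> 1/2" by blast
    have "(gs_mu n b k l)^2 \<le> (1/2)^2" using mu
      by (metis abs_ge_zero power2_abs power_mono)
    moreover have "NN l \<le> 2^(k-l) * NN (l + (k-l))" using that k by (intro lll_chain) auto
    then have "NN l \<le> 2^(k-l) * NN k" using that by simp
    ultimately show ?thesis
      by (intro mult_mono) (auto simp: rinner_self_nonneg power2_eq_square)
  qed
  have "rinner n (b k) (b k) = NN k + (\<Sum>l\<in>{1..<k}. (gs_mu n b k l)^2 * NN l)"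
    by (rule b_norm)
  also have "\<dots> \<le> NN k + (\<Sum>l\<in>{1..<k}. 1/4 * (2^(k-l) * NN k))"
    using t by (intro add_left_mono sum_mono) auto
  also have "\<dots> = NN k * (1 + 1/4 * (\<Sum>l\<in>{1..<k}. 2^(k-l)))"
    by (simp add: sum_distrib_left distrib_left mult.commute mult.left_commute)
  also have "\<dots> \<le> NN k * (1 + 1/4 * (2^k - 2))"
    using geo2[of k] k by (intro mult_left_mono) (auto simp: rinner_self_nonneg)
  also have "\<dots> \<le> NN k * 2^(k-1)"
  proof (intro mult_left_mono)
    obtain j where j: "k = Suc j" using k by (cases k) auto
    have h: "(1::real) \<le> 2^j" by simp
    have g: "\<And>x::real. 1 \<le> x \<Longrightarrow> 1 + 1/4 * (2 * x - 2) \<le> x" by (simp add: field_simps)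
    have "1 + 1/4 * (2 * 2^j - 2) \<le> (2::real)^j" using g[OF h] .
    then show "1 + 1/4 * (2^k - 2) \<le> (2::real)^(k-1)" unfolding j by simp
  qed (simp add: rinner_self_nonneg)
  finally show ?thesis by (simp add: mult.commute)
qed

end

lemma rinner_expand: "rinner n (\<lambda>k. v k - t * w k) (\<lambda>k. v k - t * w k)
   = rinner n v v - 2 * t * rinner n v w + t^2 * rinner n w w"
proof -
  have e: "(v k - t * w k) * (v k - t * w k) = v k * v k - 2 * t * (v k * w k) + t^2 * (w k * w k)" for k
    by (simp add: algebra_simps power2_eq_square)
  show ?thesis unfolding rinner_def e
    by (simp add: sum.distrib sum_subtractf sum_distrib_left)
qed

lemma key:
  fixes d :: "nat \<Rightarrow> int"
  assumes L: "LLL_reduced (3/4) n m b" and K: "1 \<le> K" "K \<le> m" and dK: "d K \<noteq> 0"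
    and dz: "\<forall>j. K < j \<and> j \<le> m \<longrightarrow> d j = 0"
  shows "rinner n (b K) (b K) \<le> 2^(K-1) * rinner n (\<lambda>k. \<Sum>j\<in>{1..m}. real_of_int (d j) * b j k) (\<lambda>k. \<Sum>j\<in>{1..m}. real_of_int (d j) * b j k)"
proof -
  define v where "v = (\<lambda>k. \<Sum>j\<in>{1..m}. real_of_int (d j) * b j k)"
  define N where "N = rinner n (gso n b K) (gso n b K)"
  have z: "real_of_int (d j) * rinner n (b j) (gso n b K) = 0" if "j \<in> {1..m} - {K}" for j
  proof (cases "j < K")
    case True then show ?thesis using b_gso_orth[of j K n b] that by simp
  next
    case False then show ?thesis using dz that by auto
  qed
  have "rinner n v (gso n b K) = (\<Sum>j\<in>{1..m}. real_of_int (d j) * rinner n (b j) (gso n b K))"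
    unfolding v_def by (rule rinner_sum_left)
  also have "\<dots> = real_of_int (d K) * rinner n (b K) (gso n b K)"
  proof -
    have s0: "(\<Sum>j\<in>{1..m}-{K}. real_of_int (d j) * rinner n (b j) (gso n b K)) = 0"
      using z by (intro sum.neutral) blast
    show ?thesis by (subst sum.remove[of _ K]) (use K s0 in auto)
  qed
  finally have vg: "rinner n v (gso n b K) = real_of_int (d K) * N"
    unfolding N_def b_gso_self .
  have "0 \<le> rinner n (\<lambda>k. v k - real_of_int (d K) * gso n b K k) (\<lambda>k. v k - real_of_int (d K) * gso n b K k)"
    by (rule rinner_self_nonneg)
  also have "\<dots> = rinner n v v - (real_of_int (d K))^2 * N"
    unfolding rinner_expand vg N_def by (simp add: power2_eq_square)
  finally have 1: "(real_of_int (d K))^2 * N \<le> rinner n v v" by simp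
  have "1 \<le> (real_of_int (d K))^2"
  proof -
    have "1 \<le> \<bar>d K\<bar>" using dK by simp
    then have "1 \<le> \<bar>real_of_int (d K)\<bar>" by linarith
    then show ?thesis by (metis abs_ge_zero one_le_power power2_abs)
  qed
  then have "N \<le> (real_of_int (d K))^2 * N"
    using rinner_self_nonneg[of n "gso n b K"] unfolding N_def
    by (metis mult_le_cancel_right1 order.strict_iff_not)
  with 1 have "N \<le> rinner n v v" by linarith
  moreover have "rinner n (b K) (b K) \<le> 2^(K-1) * N" unfolding N_def using lll_bound[OF L K] .
  ultimately have "rinner n (b K) (b K) \<le> 2^(K-1) * rinner n v v"
    by (meson mult_left_mono order_trans zero_le_numeral zero_le_power)
  then show ?thesis unfolding v_def .
qed

lemma sum_split: "(\<Sum>k<p+m. f k) = (\<Sum>k<p. f k) + (\<Sum>l<m. f (p+l))"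
  for p m :: nat and f :: "nat \<Rightarrow> 'a::comm_monoid_add"
  by (induction m) (simp_all add: add.assoc)

lemma L2_sq: "(L2_set f {..<n})^2 = (\<Sum>k<n. (f k)^2)"
  unfolding L2_set_def by (simp add: sum_nonneg)

lemma rinner_split: "rinner (p+m) x x = (L2_set x {..<p})^2 + (L2_set (\<lambda>l. x (p+l)) {..<m})^2"
  unfolding L2_sq rinner_def sum_split by (simp add: power2_eq_square)

lemma znorm_sq: "(znorm n x)^2 = rinner n (\<lambda>k. real_of_int (x k)) (\<lambda>k. real_of_int (x k))"
  unfolding znorm_def rnorm_sq ..

lemma znorm_eq: "znorm n x = sqrt (rinner n (\<lambda>k. real_of_int (x k)) (\<lambda>k. real_of_int (x k)))"
  unfolding znorm_def rnorm_def rinner_def by (simp add: power2_eq_square)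

lemma Rset_span:
  assumes "\<forall>v\<in>S. \<forall>k<p. v k = (\<Sum>l<m. v (p+l) * Pb l k)" "w \<in> int_span S" "k < p"
  shows "w k = (\<Sum>l<m. w (p+l) * Pb l k)"
proof -
  obtain F c where F: "finite F" "F \<subseteq> S" and w: "w = (\<lambda>k. \<Sum>v\<in>F. c v * v k)"
    using assms(2) unfolding int_span_def by blast
  have "(\<Sum>l<m. w (p+l) * Pb l k) = (\<Sum>l<m. \<Sum>v\<in>F. c v * (v (p+l) * Pb l k))"
    unfolding w by (simp add: sum_distrib_right mult.assoc)
  also have "\<dots> = (\<Sum>v\<in>F. c v * (\<Sum>l<m. v (p+l) * Pb l k))"
    by (subst sum.swap) (simp add: sum_distrib_left)
  also have "\<dots> = (\<Sum>v\<in>F. c v * v k)"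
    using assms(1,3) F by (intro sum.cong) auto
  finally show ?thesis unfolding w by simp
qed

lemma L2_abs: "L2_set (\<lambda>k. \<bar>f k\<bar>) A = L2_set f A"
  unfolding L2_set_def by simp

lemma L2_neg: "L2_set (\<lambda>k. - f k) A = L2_set f A"
  unfolding L2_set_def by simp

lemma ebound:
  fixes x :: "nat \<Rightarrow> int" and P :: "nat \<Rightarrow> nat \<Rightarrow> real" and Pb :: "nat \<Rightarrow> nat \<Rightarrow> int"
  assumes E: "\<forall>j<m. \<forall>k<p. \<bar>real_of_int (Pb j k) - \<beta> * P j k\<bar> \<le> 1/2" and pm: "p \<le> m"
  shows "L2_set (\<lambda>k. (\<Sum>l<m. real_of_int (x l) * real_of_int (Pb l k)) - \<beta> * (\<Sum>l<m. real_of_int (x l) * P l k)) {..<p}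
     \<le> real m / 2 * L2_set (\<lambda>l. real_of_int (x l)) {..<m}"
proof -
  define c where "c = L2_set (\<lambda>l. real_of_int (x l)) {..<m}"
  define e where "e k = (\<Sum>l<m. real_of_int (x l) * real_of_int (Pb l k)) - \<beta> * (\<Sum>l<m. real_of_int (x l) * P l k)" for k
  have eb: "\<bar>e k\<bar> \<le> c * sqrt m / 2" if "k < p" for k
  proof -
    have "e k = (\<Sum>l<m. real_of_int (x l) * (real_of_int (Pb l k) - \<beta> * P l k))"
      unfolding e_def by (simp add: sum_distrib_left right_diff_distrib sum_subtractf mult.left_commute)
    then have "\<bar>e k\<bar> \<le> (\<Sum>l<m. \<bar>real_of_int (x l) * (real_of_int (Pb l k) - \<beta> * P l k)\<bar>)"
      by (simp add: sum_abs)
    also have "\<dots> \<le> (\<Sum>l<m. \<bar>real_of_int (x l)\<bar> * \<bar>1/2\<bar>)"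
    proof (intro sum_mono)
      fix l assume "l \<in> {..<m}"
      then have "\<bar>real_of_int (Pb l k) - \<beta> * P l k\<bar> \<le> \<bar>1/2\<bar>" using E that by auto
      then show "\<bar>real_of_int (x l) * (real_of_int (Pb l k) - \<beta> * P l k)\<bar> \<le> \<bar>real_of_int (x l)\<bar> * \<bar>1/2\<bar>"
        unfolding abs_mult by (intro mult_left_mono) auto
    qed
    also have "\<dots> = 1/2 * (\<Sum>l<m. \<bar>real_of_int (x l)\<bar> * \<bar>1\<bar>)"
      by (simp add: sum_distrib_left)
    also have "\<dots> \<le> 1/2 * (c * L2_set (\<lambda>l. 1) {..<m})"
      unfolding c_def by (intro mult_left_mono L2_set_mult_ineq) auto
    also have "\<dots> = c * sqrt m / 2" by (simp add: L2_set_constant)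
    finally show ?thesis .
  qed
  have "L2_set e {..<p} = L2_set (\<lambda>k. \<bar>e k\<bar>) {..<p}" by (simp add: L2_abs)
  also have "\<dots> \<le> L2_set (\<lambda>k. c * sqrt m / 2) {..<p}"
    using eb by (intro L2_set_mono) auto
  also have "\<dots> = sqrt p * (c * sqrt m / 2)" by (simp add: L2_set_constant c_def)
  also have "\<dots> \<le> sqrt m * (c * sqrt m / 2)"
    using pm by (intro mult_right_mono) (auto simp: c_def)
  also have "\<dots> = real m / 2 * c" by simp
  finally show ?thesis unfolding e_def c_def .
qed

lemma num1:
  fixes a c B M :: real
  assumes "0 \<le> a" "0 \<le> c" "a^2 + c^2 \<le> B^2" "0 < B" "2 \<le> M"
  shows "a + M/2 * c < M * B"
proof -
  have "(a + M/2*c)^2 \<le> (1 + M^2/4) * (a^2 + c^2)"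
  proof -
    have "0 \<le> (M/2*a - c)^2" by simp
    moreover have "(1 + M^2/4) * (a^2 + c^2) - (a + M/2*c)^2 = (M/2*a - c)^2"
      by (simp add: power2_eq_square algebra_simps)
    ultimately show ?thesis by linarith
  qed
  also have "\<dots> \<le> (1 + M^2/4) * B^2" using assms by (intro mult_left_mono) auto
  also have "\<dots> < M^2 * B^2"
  proof -
    have "1 + M^2/4 < M^2"
    proof -
      have "2*2 \<le> M*M" using assms(5) by (intro mult_mono) auto
      then have "4 \<le> M^2" by (simp add: power2_eq_square)
      then show ?thesis by simp
    qed
    moreover have "0 < B^2" using assms by simp
    ultimately show ?thesis by simp
  qed
  also have "\<dots> = (M * B)^2" by (simp add: power_mult_distrib)
  finally have "(a + M/2*c)^2 < (M*B)^2" .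
  moreover have "0 \<le> M*B" using assms by simp
  ultimately show ?thesis by (rule power2_less_imp_less)
qed

lemma num2:
  fixes a c B M Y :: real
  assumes "0 \<le> a" "0 \<le> c" "c \<le> B" "a \<le> Y + M/2 * c" "Y < M * B" "2 \<le> M"
  shows "a^2 + c^2 < 4 * M^2 * B^2"
proof -
  have "M/2 * c \<le> M/2 * B" using assms by (intro mult_left_mono) auto
  then have a1: "a < 3/2 * (M*B)" using assms by linarith
  have "a^2 < (3/2*(M*B))^2" using a1 assms by (intro power_strict_mono) auto
  also have "(3/2*(M*B))^2 = 9/4 * (M^2*B^2)" by (simp add: power_mult_distrib power2_eq_square)
  finally have "a^2 < 9/4 * (M^2*B^2)" .
  moreover have "c^2 \<le> B^2" using assms by (intro power_mono) auto
  moreover have "B^2 \<le> M^2 * B^2"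
  proof -
    have "1*1 \<le> M*M" using assms by (intro mult_mono) auto
    then have "1 * B^2 \<le> M^2 * B^2" by (intro mult_right_mono) (auto simp: power2_eq_square)
    then show ?thesis by simp
  qed
  moreover have "0 \<le> a^2" by simp
  ultimately have "a^2 + c^2 < 4 * (M^2*B^2)" by linarith
  then show ?thesis by simp
qed

lemma Qsq: "(2 powr (- (real m + 1) / 2))^2 * 2^(m+1) = 1"
proof -
  have "(2 powr (- (real m + 1) / 2))^2 = 2 powr (- (real m + 1))"
    by (simp add: power2_eq_square flip: powr_add)
  moreover have "(2::real)^(m+1) = 2 powr (real m + 1)"
    by (metis of_nat_Suc powr_realpow zero_less_numeral add.commute Suc_eq_plus1)
  ultimately show ?thesis by (simp flip: powr_add)
qed

lemma augrow_R:
  assumes "l < m" "k < p"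
  shows "augrow m p Pb l k = (\<Sum>l'<m. augrow m p Pb l (p+l') * Pb l' k)"
proof -
  have "(\<Sum>l'<m. augrow m p Pb l (p+l') * Pb l' k) = (\<Sum>l'<m. (if l' = l then Pb l' k else 0))"
    by (intro sum.cong) (auto simp: augrow_def)
  also have "\<dots> = Pb l k" using assms by simp
  finally show ?thesis using assms by (simp add: augrow_def)
qed

lemma aug_R: "w \<in> augLattice m p Pb \<Longrightarrow> k < p \<Longrightarrow> w k = (\<Sum>l<m. w (p+l) * Pb l k)"
  unfolding augLattice_def
  by (rule Rset_span[of "augrow m p Pb ` {..<m}"]) (use augrow_R in auto)

lemma basis_sum_delta:
  fixes b :: "nat \<Rightarrow> nat \<Rightarrow> int" and m j :: nat
  assumes "j \<in> {1..m}"
  shows "(\<Sum>i=1..m. (if i = j then 1 else 0) * b i k) = (b j k :: int)"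
proof -
  have "(\<Sum>i=1..m. (if i = j then 1 else 0) * b i k) = (\<Sum>i=1..m. (if i = j then b i k else 0))"
    by (intro sum.cong) auto
  also have "\<dots> = b j k" using assms by simp
  finally show ?thesis .
qed

lemma b_nonzero:
  assumes B: "is_lattice_basis n m b L" and j: "j \<in> {1..m}"
  shows "0 < rinner n (\<lambda>k. real_of_int (b j k)) (\<lambda>k. real_of_int (b j k))"
proof -
  have ex: "\<exists>k<n. b j k \<noteq> 0"
  proof (rule ccontr)
    assume "\<not> ?thesis"
    moreover have "\<forall>k\<ge>n. b j k = 0" using B j unfolding is_lattice_basis_def zvecs_def by auto
    ultimately have z: "\<forall>k. b j k = 0" by (meson not_less)
    define c :: "nat \<Rightarrow> int" where "c i = (if i = j then 1 else 0)" for i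
    have "\<forall>k. (\<Sum>i=1..m. c i * b i k) = 0"
      unfolding c_def using basis_sum_delta[OF j, of b] z by simp
    then have "c j = 0" using B j unfolding is_lattice_basis_def by blast
    then show False unfolding c_def by simp
  qed
  then obtain k where k: "k < n" "b j k \<noteq> 0" by blast
  have "0 < (real_of_int (b j k))^2" using k by simp
  also have "\<dots> \<le> (\<Sum>k'<n. (real_of_int (b j k'))^2)"
    using k by (intro member_le_sum) auto
  finally show ?thesis unfolding rinner_def by (simp add: power2_eq_square)
qed

lemma b_inj:
  assumes B: "is_lattice_basis n m b L"
  shows "inj_on b {1..m}"
proof (rule inj_onI, rule ccontr)
  fix j j' assume j: "j \<in> {1..m}" "j' \<in> {1..m}" "b j = b j'" "j \<noteq> j'"
  define c :: "nat \<Rightarrow> int" where "c i = (if i = j then 1 else 0) - (if i = j' then 1 else 0)" for i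
  have "(\<Sum>i=1..m. c i * b i k) = 0" for k
  proof -
    have "(\<Sum>i=1..m. c i * b i k) = (\<Sum>i=1..m. (if i = j then 1 else 0) * b i k) - (\<Sum>i=1..m. (if i = j' then 1 else 0) * b i k)"
      unfolding c_def by (simp add: left_diff_distrib sum_subtractf)
    also have "\<dots> = 0" using basis_sum_delta[OF j(1), of b k] basis_sum_delta[OF j(2), of b k] j(3) by simp
    finally show ?thesis .
  qed
  then have "c j = 0" using B j unfolding is_lattice_basis_def by blast
  then show False using j(4) unfolding c_def by simp
qed

lemma sorted_le:
  assumes S: "\<forall>j\<in>{1..<m}. znorm n (b j) \<le> znorm n (b (Suc j))"
  shows "1 \<le> j \<Longrightarrow> j \<le> j' \<Longrightarrow> j' \<le> m \<Longrightarrow> znorm n (b j) \<le> znorm n (b j')"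
proof (induction j')
  case 0 then show ?case by simp
next
  case (Suc j')
  show ?case
  proof (cases "j = Suc j'")
    case True then show ?thesis by simp
  next
    case False
    then have "znorm n (b j) \<le> znorm n (b j')" using Suc by simp
    also have "\<dots> \<le> znorm n (b (Suc j'))" using S Suc False by auto
    finally show ?thesis .
  qed
qed

lemma znorm_L2: "znorm n x = L2_set (\<lambda>k. real_of_int (x k)) {..<n}"
  unfolding znorm_def rnorm_def L2_set_def ..

lemma rnorm_L2: "rnorm n x = L2_set x {..<n}"
  unfolding rnorm_def L2_set_def ..

lemma vecmat_L2: "rnorm p (vecmat m p x P) = L2_set (\<lambda>k. \<Sum>l<m. real_of_int (x l) * P l k) {..<p}"
  unfolding rnorm_L2 vecmat_def by (rule L2_set_cong) auto

theorem lemma4p2: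
  fixes m p :: nat and P :: "nat \<Rightarrow> nat \<Rightarrow> real" and \<beta> :: real
    and Pb :: "nat \<Rightarrow> nat \<Rightarrow> int" and b :: "nat \<Rightarrow> (nat \<Rightarrow> int)"
    and i :: nat and B :: real
  assumes "2 \<le> m" and "1 \<le> p" and "p \<le> m"
    and "\<beta> > 0"
    and "\<forall>j<m. \<forall>k<p. \<bar>real_of_int (Pb j k) - \<beta> * P j k\<bar> \<le> 1/2"
    and "is_lattice_basis (p + m) m b (augLattice m p Pb)"
    and "LLL_reduced (3/4) (p + m) m (\<lambda>i k. real_of_int (b i k))"
    and "\<forall>j\<in>{1..<m}. znorm (p + m) (b j) \<le> znorm (p + m) (b (Suc j))"
    and "i < m"
    and "(if i = 0 then 0 else znorm (p + m) (b i)) \<le> B"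
    and "B \<le> (1 / real m) * 2 powr (- (real m + 1) / 2) * znorm (p + m) (b (Suc i))"
  shows "Lam m p P B (real m * B / \<beta>) = int_span ((\<lambda>j. pr m p (b j)) ` {1..i})"
proof -
  note m2 = assms(1) and pm = assms(3) and bpos = assms(4) and E = assms(5)
    and Bas = assms(6) and L = assms(7) and S = assms(8) and im = assms(9)
    and Blo = assms(10) and Bhi = assms(11)
  define G where "G = {x \<in> zvecs m. znorm m x \<le> B \<and> rnorm p (vecmat m p x P) < real m * B / \<beta>}"
  define T where "T = int_span ((\<lambda>j. pr m p (b j)) ` {1..i})"
  have Lam_eq: "Lam m p P B (real m * B / \<beta>) = int_span G" unfolding Lam_def G_def ..
  have span_b: "int_span (b ` {1..m}) = augLattice m p Pb"
    using Bas unfolding is_lattice_basis_def by blast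
  have b_aug: "b j \<in> augLattice m p Pb" if "j \<in> {1..m}" for j
    using int_span_mem[of "b j" "b ` {1..m}"] that span_b by auto
  have znn: "0 \<le> znorm n y" for n y unfolding znorm_L2 by simp
  have B0: "0 \<le> B" using Blo znn by (auto split: if_splits intro: order_trans)

  have tri: "\<beta> * L2_set (\<lambda>k. \<Sum>l<m. real_of_int (x l) * P l k) {..<p}
      \<le> L2_set (\<lambda>k. \<Sum>l<m. real_of_int (x l) * real_of_int (Pb l k)) {..<p} + real m / 2 * L2_set (\<lambda>l. real_of_int (x l)) {..<m}"
    for x :: "nat \<Rightarrow> int"
  proof -
    define y where "y k = (\<Sum>l<m. real_of_int (x l) * P l k)" for k
    define u where "u k = (\<Sum>l<m. real_of_int (x l) * real_of_int (Pb l k))" for k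
    have "\<beta> * L2_set y {..<p} = L2_set (\<lambda>k. \<beta> * y k) {..<p}"
      using bpos by (intro L2_set_right_distrib) simp
    also have "\<dots> = L2_set (\<lambda>k. u k + - (u k - \<beta> * y k)) {..<p}" by simp
    also have "\<dots> \<le> L2_set u {..<p} + L2_set (\<lambda>k. - (u k - \<beta> * y k)) {..<p}"
      by (rule L2_set_triangle_ineq)
    also have "\<dots> = L2_set u {..<p} + L2_set (\<lambda>k. u k - \<beta> * y k) {..<p}"
      using L2_neg[of "\<lambda>k. u k - \<beta> * y k" "{..<p}"] by simp
    also have "\<dots> \<le> L2_set u {..<p} + real m / 2 * L2_set (\<lambda>l. real_of_int (x l)) {..<m}"
      using ebound[OF E pm, of x] unfolding u_def y_def by simp
    finally show ?thesis unfolding u_def y_def .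
  qed
  have tri2: "L2_set (\<lambda>k. \<Sum>l<m. real_of_int (x l) * real_of_int (Pb l k)) {..<p}
      \<le> \<beta> * L2_set (\<lambda>k. \<Sum>l<m. real_of_int (x l) * P l k) {..<p} + real m / 2 * L2_set (\<lambda>l. real_of_int (x l)) {..<m}"
    for x :: "nat \<Rightarrow> int"
  proof -
    define y where "y k = (\<Sum>l<m. real_of_int (x l) * P l k)" for k
    define u where "u k = (\<Sum>l<m. real_of_int (x l) * real_of_int (Pb l k))" for k
    have "L2_set u {..<p} = L2_set (\<lambda>k. \<beta> * y k + (u k - \<beta> * y k)) {..<p}" by simp
    also have "\<dots> \<le> L2_set (\<lambda>k. \<beta> * y k) {..<p} + L2_set (\<lambda>k. u k - \<beta> * y k) {..<p}"
      by (rule L2_set_triangle_ineq)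
    also have "L2_set (\<lambda>k. \<beta> * y k) {..<p} = \<beta> * L2_set y {..<p}"
      using bpos by (intro L2_set_right_distrib[symmetric]) simp
    also have "L2_set (\<lambda>k. u k - \<beta> * y k) {..<p} \<le> real m / 2 * L2_set (\<lambda>l. real_of_int (x l)) {..<m}"
      using ebound[OF E pm, of x] unfolding u_def y_def by simp
    finally show ?thesis unfolding u_def y_def by simp
  qed

  have sup: "T \<subseteq> int_span G"
    unfolding T_def
  proof (rule int_span_sub, rule subsetI)
    fix v assume "v \<in> (\<lambda>j. pr m p (b j)) ` {1..i}"
    then obtain j where j: "j \<in> {1..i}" and v: "v = pr m p (b j)" by blast
    have jm: "j \<in> {1..m}" using j im by auto
    have i0: "i \<noteq> 0" using j by auto
    define x where "x = pr m p (b j)"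
    have xl: "x l = b j (p+l)" if "l < m" for l using that unfolding x_def pr_def by simp
    have xz: "x \<in> zvecs m" unfolding x_def pr_def zvecs_def by simp
    define a where "a = L2_set (\<lambda>k. real_of_int (b j k)) {..<p}"
    define c where "c = L2_set (\<lambda>l. real_of_int (x l)) {..<m}"
    have c_eq: "L2_set (\<lambda>l. real_of_int (b j (p+l))) {..<m} = c"
      unfolding c_def by (rule L2_set_cong) (auto simp: xl)
    have nb: "(znorm (p+m) (b j))^2 = a^2 + c^2"
      unfolding znorm_sq rinner_split a_def c_eq ..
    have zpos: "0 < znorm (p+m) (b j)"
      using b_nonzero[OF Bas jm] unfolding znorm_eq by simp
    have zB: "znorm (p+m) (b j) \<le> B"
    proof -
      have "znorm (p+m) (b j) \<le> znorm (p+m) (b i)" using sorted_le[OF S, of j i] j im by auto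
      also have "\<dots> \<le> B" using Blo i0 by simp
      finally show ?thesis .
    qed
    have Bpos: "0 < B" using zpos zB by linarith
    have a0: "0 \<le> a" and c0: "0 \<le> c" unfolding a_def c_def by simp_all
    have "a^2 + c^2 \<le> B^2" unfolding nb[symmetric] using zpos zB by (intro power_mono) auto
    then have lt: "a + real m / 2 * c < real m * B"
      using num1[OF a0 c0 _ Bpos, of "real m"] m2 by simp
    have u_eq: "L2_set (\<lambda>k. \<Sum>l<m. real_of_int (x l) * real_of_int (Pb l k)) {..<p} = a"
      unfolding a_def
    proof (rule L2_set_cong)
      fix k assume "k \<in> {..<p}"
      then have "b j k = (\<Sum>l<m. b j (p+l) * Pb l k)" using aug_R[OF b_aug[OF jm]] by simp
      then show "(\<Sum>l<m. real_of_int (x l) * real_of_int (Pb l k)) = real_of_int (b j k)"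
        by (simp add: xl)
    qed simp
    have "\<beta> * rnorm p (vecmat m p x P) < real m * B"
      using tri[of x] lt unfolding vecmat_L2 u_eq c_def by linarith
    then have Y: "rnorm p (vecmat m p x P) < real m * B / \<beta>"
      using bpos by (simp add: pos_less_divide_eq mult.commute)
    have "znorm m x = c" unfolding znorm_L2 c_def ..
    moreover have "c \<le> znorm (p+m) (b j)"
    proof -
      have "c^2 \<le> (znorm (p+m) (b j))^2" unfolding nb by simp
      then show ?thesis by (rule power2_le_imp_le[OF _ znn])
    qed
    ultimately have xB: "znorm m x \<le> B" using zB by linarith
    have "x \<in> G" unfolding G_def using xz Y xB by blast
    then show "v \<in> int_span G" unfolding v x_def[symmetric] by (rule int_span_mem)
  qed
  have sub: "int_span G \<subseteq> T"
    unfolding T_def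
  proof (rule int_span_sub, rule subsetI)
    fix x assume "x \<in> G"
    then have xz: "x \<in> zvecs m" and xB: "znorm m x \<le> B" and xY: "rnorm p (vecmat m p x P) < real m * B / \<beta>"
      unfolding G_def by blast+
    define w where "w k = (if k < p then (\<Sum>l<m. x l * Pb l k) else if k < p + m then x (k - p) else 0)" for k
    have w_eq: "w = (\<lambda>k. \<Sum>l\<in>{..<m}. x l * augrow m p Pb l k)"
    proof
      fix k
      show "w k = (\<Sum>l\<in>{..<m}. x l * augrow m p Pb l k)"
      proof (cases "k < p")
        case True then show ?thesis unfolding w_def augrow_def by simp
      next
        case False
        then have "(\<Sum>l\<in>{..<m}. x l * augrow m p Pb l k) = (\<Sum>l\<in>{..<m}. if l = k - p then (if k < p + m then x l else 0) else 0)"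
          unfolding augrow_def by (intro sum.cong) auto
        also have "\<dots> = w k" using False unfolding w_def by auto
        finally show ?thesis by simp
      qed
    qed
    have "w \<in> augLattice m p Pb" unfolding w_eq augLattice_def
      by (rule int_span_sum) (auto intro: int_span_mem)
    then have "w \<in> int_span (b ` {1..m})" using span_b by simp
    then obtain d where d: "\<forall>k. w k = (\<Sum>j\<in>{1..m}. d j * b j k)"
      using int_span_repr[OF _ b_inj[OF Bas]] by blast
    define xr where "xr l = real_of_int (x l)" for l
    define c where "c = L2_set xr {..<m}"
    define a where "a = L2_set (\<lambda>k. real_of_int (w k)) {..<p}"
    have cB: "c \<le> B" using xB unfolding c_def xr_def znorm_L2 .
    have a0: "0 \<le> a" and c0: "0 \<le> c" unfolding a_def c_def by simp_all
    have a_eq: "a = L2_set (\<lambda>k. \<Sum>l<m. real_of_int (x l) * real_of_int (Pb l k)) {..<p}"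
      unfolding a_def by (rule L2_set_cong) (auto simp: w_def)
    have aY: "a \<le> \<beta> * rnorm p (vecmat m p x P) + real m / 2 * c"
      using tri2[of x] unfolding a_eq vecmat_L2 c_def xr_def .
    have bY: "\<beta> * rnorm p (vecmat m p x P) < real m * B"
      using xY bpos by (simp add: pos_less_divide_eq mult.commute)
    have wn: "rinner (p+m) (\<lambda>k. real_of_int (w k)) (\<lambda>k. real_of_int (w k)) = a^2 + c^2"
    proof -
      have "L2_set (\<lambda>l. real_of_int (w (p+l))) {..<m} = c"
        unfolding c_def xr_def by (rule L2_set_cong) (auto simp: w_def)
      then show ?thesis unfolding rinner_split a_def by simp
    qed
    have wlt: "rinner (p+m) (\<lambda>k. real_of_int (w k)) (\<lambda>k. real_of_int (w k)) < 4 * (real m)^2 * B^2"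
      unfolding wn using num2[OF a0 c0 cB aY bY] m2 by simp
    define Z where "Z = znorm (p+m) (b (Suc i))"
    define Q where "Q = 2 powr (- (real m + 1) / 2)"
    have mpos: "0 < real m" using m2 by simp
    have mB: "real m * B \<le> Q * Z"
    proof -
      have "real m * B \<le> real m * ((1 / real m) * Q * Z)"
        using Bhi mpos unfolding Q_def Z_def by (intro mult_left_mono) auto
      also have "\<dots> = Q * Z" using mpos by simp
      finally show ?thesis .
    qed
    have "(real m * B)^2 \<le> (Q * Z)^2" using mB B0 mpos by (intro power_mono) auto
    then have "4 * (real m)^2 * B^2 * 2^(m-1) \<le> 4 * Q^2 * Z^2 * 2^(m-1)"
      by (simp add: power_mult_distrib)
    also have "4 * Q^2 * Z^2 * 2^(m-1) = Q^2 * 2^(m+1) * Z^2"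
    proof -
      obtain j where mj: "m = Suc j" using m2 by (cases m) auto
      have "(2::real)^(m+1) = 4 * 2^(m-1)" unfolding mj by simp
      then show ?thesis by simp
    qed
    also have "\<dots> = Z^2" using Qsq[of m] unfolding Q_def by simp
    finally have key1: "4 * (real m)^2 * B^2 * 2^(m-1) \<le> Z^2" .
    have dz: "\<forall>j. i < j \<and> j \<le> m \<longrightarrow> d j = 0"
    proof (rule ccontr)
      assume "\<not> ?thesis"
      then obtain j0 where j0: "i < j0" "j0 \<le> m" "d j0 \<noteq> 0" by blast
      define SS where "SS = {j \<in> {1..m}. d j \<noteq> 0}"
      define K where "K = Max SS"
      have fin: "finite SS" unfolding SS_def by simp
      have j0S: "j0 \<in> SS" using j0 unfolding SS_def by auto
      then have KS: "K \<in> SS" unfolding K_def using fin by (intro Max_in) auto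
      have KM: "\<forall>j\<in>SS. j \<le> K" unfolding K_def using fin by simp
      have K1: "1 \<le> K" "K \<le> m" "d K \<noteq> 0" using KS unfolding SS_def by auto
      have Ki: "Suc i \<le> K" using KM j0S j0 by force
      have dK: "\<forall>j. K < j \<and> j \<le> m \<longrightarrow> d j = 0"
      proof (intro allI impI)
        fix j assume jj: "K < j \<and> j \<le> m"
        show "d j = 0"
        proof (rule ccontr)
          assume "d j \<noteq> 0"
          then have "j \<in> SS" using jj K1 unfolding SS_def by auto
          then have "j \<le> K" using KM by blast
          then show False using jj by simp
        qed
      qed
      have wv: "(\<lambda>k. \<Sum>j\<in>{1..m}. real_of_int (d j) * real_of_int (b j k)) = (\<lambda>k. real_of_int (w k))"
        using d by simp
      have 1: "rinner (p+m) (\<lambda>k. real_of_int (b K k)) (\<lambda>k. real_of_int (b K k))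
          \<le> 2^(K-1) * rinner (p+m) (\<lambda>k. real_of_int (w k)) (\<lambda>k. real_of_int (w k))"
        using key[OF L K1 dK] unfolding wv .
      have "Z^2 \<le> (znorm (p+m) (b K))^2"
        unfolding Z_def using sorted_le[OF S, of "Suc i" K] Ki K1 znn by (intro power_mono) auto
      also have "\<dots> = rinner (p+m) (\<lambda>k. real_of_int (b K k)) (\<lambda>k. real_of_int (b K k))" by (rule znorm_sq)
      also have "\<dots> \<le> 2^(K-1) * rinner (p+m) (\<lambda>k. real_of_int (w k)) (\<lambda>k. real_of_int (w k))" by (rule 1)
      also have "\<dots> \<le> 2^(m-1) * rinner (p+m) (\<lambda>k. real_of_int (w k)) (\<lambda>k. real_of_int (w k))"
        using K1 by (intro mult_right_mono power_increasing) (auto simp: rinner_self_nonneg)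
      also have "\<dots> < 2^(m-1) * (4 * (real m)^2 * B^2)"
        using wlt by (intro mult_strict_left_mono) auto
      also have "\<dots> \<le> Z^2" using key1 by (simp add: mult.commute)
      finally show False by simp
    qed
    have prw: "x = (\<lambda>l. \<Sum>j\<in>{1..i}. d j * pr m p (b j) l)"
    proof
      fix l
      show "x l = (\<Sum>j\<in>{1..i}. d j * pr m p (b j) l)"
      proof (cases "l < m")
        case True
        have "x l = w (p+l)" unfolding w_def using True by simp
        also have "\<dots> = (\<Sum>j\<in>{1..m}. d j * b j (p+l))" using d by simp
        also have "\<dots> = (\<Sum>j\<in>{1..i}. d j * b j (p+l))"
          by (rule sum.mono_neutral_right) (use im dz in auto)
        also have "\<dots> = (\<Sum>j\<in>{1..i}. d j * pr m p (b j) l)" unfolding pr_def using True by simp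
        finally show ?thesis .
      next
        case False
        then show ?thesis using xz unfolding zvecs_def pr_def by simp
      qed
    qed
    show "x \<in> int_span ((\<lambda>j. pr m p (b j)) ` {1..i})" unfolding prw
      by (rule int_span_sum) (auto intro: int_span_mem)
  qed
  show ?thesis unfolding Lam_eq T_def[symmetric] using sub sup by blast
qed

end
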